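(* Let $\beta=(\beta_n)_{n\ge0}$ be a sequence of positive numbers with $\liminf_n\beta_n^{1/n}\ge1$. If for some $a\in(0,1)$ the map $T_a$ induces a bounded composition operator $C_{T_a}$ on $H^2(\beta)$, then $\beta$ has a polynomial minoration.
   Context: $H^2(\beta)$ is the Hilbert space of analytic functions $f(z)=\sum_{n\ge0}a_nz^n$ on the unit disk $\mathbb D$ with $\|f\|^2=\sum_{n\ge0}|a_n|^2\beta_n<\infty$. For $a\in\mathbb D$, $T_a(z)=\frac{a+z}{1+\bar a z}$, and $C_{T_a}f=f\circ T_a$. $\beta$ has a polynomial minoration if there are constants $\delta,\alpha>0$ with $\beta_n\ge\delta n^{-\alpha}$ for all integers $n\ge1$. *)

theory Defs
  imports "HOL-Complex_Analysis.Complex_Analysis" "HOL-Library.Liminf_Limsup"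
begin

definition h2_coeff :: "(complex \<Rightarrow> complex) \<Rightarrow> nat \<Rightarrow> complex" where
  "h2_coeff f n = (deriv ^^ n) f 0 / of_nat (fact n)"

definition in_H2 :: "(nat \<Rightarrow> real) \<Rightarrow> (complex \<Rightarrow> complex) \<Rightarrow> bool" where
  "in_H2 \<beta> f \<longleftrightarrow> f holomorphic_on ball 0 1 \<and>
     summable (\<lambda>n. (cmod (h2_coeff f n))\<^sup>2 * \<beta> n)"

definition h2_norm :: "(nat \<Rightarrow> real) \<Rightarrow> (complex \<Rightarrow> complex) \<Rightarrow> real" where
  "h2_norm \<beta> f = sqrt (\<Sum>n. (cmod (h2_coeff f n))\<^sup>2 * \<beta> n)"

definition T_aut :: "complex \<Rightarrow> complex \<Rightarrow> complex" where
  "T_aut a z = (a + z) / (1 + cnj a * z)"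

definition bounded_comp_op :: "(nat \<Rightarrow> real) \<Rightarrow> (complex \<Rightarrow> complex) \<Rightarrow> bool" where
  "bounded_comp_op \<beta> \<phi> \<longleftrightarrow>
     (\<forall>f. in_H2 \<beta> f \<longrightarrow> in_H2 \<beta> (f \<circ> \<phi>)) \<and>
     (\<exists>C. \<forall>f. in_H2 \<beta> f \<longrightarrow> h2_norm \<beta> (f \<circ> \<phi>) \<le> C * h2_norm \<beta> f)"

definition polynomial_minoration :: "(nat \<Rightarrow> real) \<Rightarrow> bool" where
  "polynomial_minoration \<beta> \<longleftrightarrow>
     (\<exists>\<delta> \<alpha>. \<delta> > 0 \<and> \<alpha> > 0 \<and> (\<forall>n::nat. n \<ge> 1 \<longrightarrow> \<beta> n \<ge> \<delta> * real n powr (-\<alpha>)))"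

end

theory Submission imports Defs begin

lemma deriv_pow_iter:
  "(deriv ^^ k) (\<lambda>z::complex. z ^ n) = (\<lambda>z. of_nat (\<Prod>i = 0..<k. n - i) * z ^ (n - k))"
proof (induction k)
  case 0 then show ?case by simp
next
  case (Suc k)
  have "(deriv ^^ Suc k) (\<lambda>z::complex. z ^ n) = deriv (\<lambda>z. of_nat (\<Prod>i = 0..<k. n - i) * z ^ (n - k))"
    using Suc by simp
  also have "\<dots> = (\<lambda>z. of_nat (\<Prod>i = 0..<Suc k. n - i) * z ^ (n - Suc k))"
  proof
    fix z :: complex
    have "((\<lambda>z. of_nat (\<Prod>i = 0..<k. n - i) * z ^ (n - k)) has_field_derivative
        of_nat (\<Prod>i = 0..<k. n - i) * (of_nat (n - k) * z ^ (n - k - 1))) (at z)"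
      by (auto intro!: derivative_eq_intros)
    then show "deriv (\<lambda>z. of_nat (\<Prod>i = 0..<k. n - i) * z ^ (n - k)) z = of_nat (\<Prod>i = 0..<Suc k. n - i) * z ^ (n - Suc k)"
      by (simp add: DERIV_imp_deriv)
  qed
  finally show ?case .
qed

lemma h2_coeff_pow: "h2_coeff (\<lambda>z. z ^ n) k = (if k = n then 1 else 0)"
proof -
  have c: "h2_coeff (\<lambda>z. z ^ n) k = of_nat (\<Prod>i = 0..<k. n - i) * 0 ^ (n - k) / of_nat (fact k)"
    unfolding h2_coeff_def deriv_pow_iter by simp
  show ?thesis
  proof (cases "k = n")
    case True
    have "(\<Prod>i = 0..<n. n - i) = fact n"
      using fact_prod_rev[of n] by (metis of_nat_eq_iff of_nat_fact)
    then have "(of_nat (\<Prod>i = 0..<n. n - i) :: complex) = fact n" by (metis of_nat_fact)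
    with True c show ?thesis by (simp del: of_nat_prod)
  next
    case False
    show ?thesis
    proof (cases "k < n")
      case True then show ?thesis using c by (simp del: of_nat_prod)
    next
      case False2: False
      have "(\<Prod>i = 0..<k. n - i) = 0"
        by (rule prod_zero) (use False False2 in \<open>auto intro!: bexI[of _ n]\<close>)
      then show ?thesis using c False by (simp del: of_nat_prod)
    qed
  qed
qed

lemma pow_H2:
  shows "in_H2 \<beta> (\<lambda>z. z ^ n)" and "h2_norm \<beta> (\<lambda>z. z ^ n) = sqrt (\<beta> n)"
proof -
  have e: "(\<lambda>k. (cmod (h2_coeff (\<lambda>z. z ^ n) k))\<^sup>2 * \<beta> k) = (\<lambda>k. if k = n then \<beta> k else 0)"
    by (auto simp: h2_coeff_pow)
  have s: "(\<lambda>k. (cmod (h2_coeff (\<lambda>z. z ^ n) k))\<^sup>2 * \<beta> k) sums \<beta> n"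
    unfolding e by (rule sums_single)
  show "in_H2 \<beta> (\<lambda>z. z ^ n)" unfolding in_H2_def
    using s by (auto intro!: holomorphic_intros simp: sums_summable)
  show "h2_norm \<beta> (\<lambda>z. z ^ n) = sqrt (\<beta> n)" unfolding h2_norm_def using s sums_unique by metis
qed

lemma norm_lower:
  assumes "\<And>n. \<beta> n > 0" "in_H2 \<beta> g"
  shows "sqrt ((cmod (g 0))\<^sup>2 * \<beta> 0) \<le> h2_norm \<beta> g"
proof -
  have sm: "summable (\<lambda>n. (cmod (h2_coeff g n))\<^sup>2 * \<beta> n)" using assms(2) by (simp add: in_H2_def)
  have "(\<Sum>n\<in>{0}. (cmod (h2_coeff g n))\<^sup>2 * \<beta> n) \<le> (\<Sum>n. (cmod (h2_coeff g n))\<^sup>2 * \<beta> n)"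
    by (rule sum_le_suminf[OF sm]) (auto intro: mult_nonneg_nonneg less_imp_le[OF assms(1)])
  then show ?thesis unfolding h2_norm_def by (simp add: h2_coeff_def)
qed

lemma final_arith:
  fixes \<beta> r :: "nat \<Rightarrow> real" and a K :: real
  assumes b0: "\<beta> 0 > 0" and bpos: "\<And>n. \<beta> n > 0" and a: "0 < a" "a < 1" and K: "K \<ge> 2"
    and key: "\<And>n m. sqrt (\<beta> 0) * (r m) ^ n \<le> K ^ m * sqrt (\<beta> n)"
    and rb: "\<And>m. 0 \<le> r m \<and> 1 - r m \<le> (1 - a) ^ m"
  shows "polynomial_minoration \<beta>"
proof -
  define L where "L = - ln (1 - a)"
  have L: "L > 0" using a by (simp add: L_def)
  have lK: "ln K > 0" using K by simp
  define \<alpha> where "\<alpha> = 2 * ln K / L"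
  have \<alpha>: "\<alpha> > 0" using L lK by (simp add: \<alpha>_def)
  define \<delta> where "\<delta> = \<beta> 0 / (4 * K ^ 2 * 2 powr \<alpha>)"
  have \<delta>: "\<delta> > 0" using b0 K by (simp add: \<delta>_def)
  have "\<beta> n \<ge> \<delta> * real n powr (-\<alpha>)" if n: "n \<ge> 1" for n
  proof -
    define m where "m = nat \<lceil>ln (2 * real n) / L\<rceil>"
    have ln2n: "ln (2 * real n) \<ge> 0" using n by simp
    have m1: "real m \<ge> ln (2 * real n) / L" unfolding m_def by linarith
    have m2: "real m \<le> ln (2 * real n) / L + 1" unfolding m_def
      using ln2n L by (simp add: of_nat_nat)
    have "(1 - a) ^ m = exp (- (real m * L))"
      using a by (simp add: L_def exp_of_nat_mult) 
    also have "\<dots> \<le> exp (- ln (2 * real n))"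
      using m1 L by (simp add: field_simps)
    also have "\<dots> = 1 / (2 * real n)" using n by (simp add: exp_minus inverse_eq_divide)
    finally have am: "(1 - a) ^ m \<le> 1 / (2 * real n)" .
    have rm: "r m - 1 \<ge> - (1 / (2 * real n))" using rb[of m] am by linarith
    have "1 + real n * (r m - 1) \<le> (1 + (r m - 1)) ^ n"
      by (rule Bernoulli_inequality) (use rb[of m] am n in \<open>auto simp: field_simps\<close>)
    moreover have "real n * (r m - 1) \<ge> real n * (- (1 / (2 * real n)))"
      using rm by (intro mult_left_mono) auto
    ultimately have half: "(r m) ^ n \<ge> 1 / 2" using n by (simp add: field_simps)
    have "sqrt (\<beta> 0) * (1/2) \<le> K ^ m * sqrt (\<beta> n)"
      using key[of m n] half by (meson b0 mult_left_mono order_trans real_sqrt_ge_zero less_imp_le)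
    then have "(sqrt (\<beta> 0) * (1/2))\<^sup>2 \<le> (K ^ m * sqrt (\<beta> n))\<^sup>2"
      using b0 by (intro power_mono) auto
    then have sq: "\<beta> 0 / 4 \<le> K ^ (2 * m) * \<beta> n"
      using b0 bpos[of n] by (simp add: power_mult_distrib power_mult[symmetric] mult.commute power_divide)
    have "K ^ m = exp (real m * ln K)" using K by (simp add: exp_of_nat_mult)
    also have "\<dots> \<le> exp ((ln (2 * real n) / L + 1) * ln K)"
      using m2 lK by (intro exp_mono mult_right_mono) auto
    also have "\<dots> = K * (2 * real n) powr (ln K / L)"
      using K n by (simp add: powr_def exp_add algebra_simps)
    finally have Km: "K ^ m \<le> K * (2 * real n) powr (ln K / L)" .
    have "K ^ (2 * m) = (K ^ m)\<^sup>2" by (simp add: power_mult mult.commute)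
    also have "\<dots> \<le> (K * (2 * real n) powr (ln K / L))\<^sup>2"
      using Km K by (intro power_mono) auto
    also have "\<dots> = K\<^sup>2 * (2 * real n) powr \<alpha>"
      using n by (simp add: power_mult_distrib powr_powr[symmetric] \<alpha>_def powr_realpow[symmetric]
        powr_powr mult.commute)
    also have "\<dots> = K\<^sup>2 * 2 powr \<alpha> * real n powr \<alpha>"
      by (simp add: powr_mult)
    finally have K2m: "K ^ (2 * m) \<le> K\<^sup>2 * 2 powr \<alpha> * real n powr \<alpha>" .
    have "\<beta> 0 / 4 \<le> K\<^sup>2 * 2 powr \<alpha> * real n powr \<alpha> * \<beta> n"
      using sq K2m bpos[of n] by (meson less_imp_le mult_right_mono order_trans)
    then show ?thesis using n K
      by (simp add: \<delta>_def powr_minus field_simps)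
  qed
  then show ?thesis unfolding polynomial_minoration_def using \<delta> \<alpha> by blast
qed

fun rseq :: "real \<Rightarrow> nat \<Rightarrow> real" where
  "rseq a 0 = 0"
| "rseq a (Suc m) = (a + rseq a m) / (1 + a * rseq a m)"

lemma rseq_props:
  assumes "0 < a" "a < 1"
  shows "0 \<le> rseq a m \<and> rseq a m < 1 \<and> 1 - rseq a m \<le> (1 - a) ^ m"
proof (induction m)
  case 0 then show ?case by simp
next
  case (Suc m)
  define r where "r = rseq a m"
  have r: "0 \<le> r" "r < 1" "1 - r \<le> (1 - a) ^ m" using Suc by (auto simp: r_def)
  have d: "1 + a * r \<ge> 1" using r assms by simp
  have e: "1 - (a + r) / (1 + a * r) = (1 - a) * (1 - r) / (1 + a * r)"
    using d by (simp add: field_simps)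
  have "(1 - a) * (1 - r) / (1 + a * r) \<le> (1 - a) * (1 - r)"
    using divide_left_mono[of 1 "1 + a * r" "(1 - a) * (1 - r)"] d r assms by simp
  also have "\<dots> \<le> (1 - a) * (1 - a) ^ m" using r assms by (intro mult_left_mono) auto
  finally have c3: "1 - (a + r) / (1 + a * r) \<le> (1 - a) ^ Suc m" using e by simp
  have c1: "0 \<le> (a + r) / (1 + a * r)" using r assms d by simp
  have "(1 - a) * (1 - r) / (1 + a * r) > 0" proof -
    have d': "0 < 1 + a * r" using d by linarith
    show ?thesis using r assms d' by (intro divide_pos_pos mult_pos_pos) auto
  qed
  then have c2: "(a + r) / (1 + a * r) < 1" using e by linarith
  show ?case using c1 c2 c3 by (simp add: r_def)
qed

lemma T_iter:
  "(T_aut (complex_of_real a) ^^ m) 0 = complex_of_real (rseq a m)"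
proof (induction m)
  case 0 then show ?case by simp
next
  case (Suc m)
  show ?case using Suc by (simp add: T_aut_def)
qed

theorem mainTheorem3:
  fixes \<beta> :: "nat \<Rightarrow> real" and a :: real
  assumes "\<And>n. \<beta> n > 0"
    and "liminf (\<lambda>n. ereal (root n (\<beta> n))) \<ge> 1"
    and "0 < a" and "a < 1"
    and "bounded_comp_op \<beta> (T_aut (complex_of_real a))"
  shows "polynomial_minoration \<beta>"
proof -
  define \<phi> where "\<phi> = T_aut (complex_of_real a)"
  obtain C where cl: "\<And>f. in_H2 \<beta> f \<Longrightarrow> in_H2 \<beta> (f \<circ> \<phi>)"
    and C: "\<And>f. in_H2 \<beta> f \<Longrightarrow> h2_norm \<beta> (f \<circ> \<phi>) \<le> C * h2_norm \<beta> f"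
    using assms(5) unfolding bounded_comp_op_def \<phi>_def by blast
  define K where "K = max C 2"
  have K: "K \<ge> 2" by (simp add: K_def)
  have hn: "h2_norm \<beta> f \<ge> 0" if "in_H2 \<beta> f" for f
  proof -
    have "0 \<le> (\<Sum>n. (cmod (h2_coeff f n))\<^sup>2 * \<beta> n)"
      using that assms(1) unfolding in_H2_def
      by (intro suminf_nonneg mult_nonneg_nonneg) (simp_all add: less_imp_le)
    then show ?thesis unfolding h2_norm_def by simp
  qed
  have it: "in_H2 \<beta> (\<lambda>z. ((\<phi> ^^ m) z) ^ n) \<and> h2_norm \<beta> (\<lambda>z. ((\<phi> ^^ m) z) ^ n) \<le> K ^ m * sqrt (\<beta> n)"
    for m n
  proof (induction m)
    case 0 then show ?case using pow_H2[of \<beta> n] by simp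
  next
    case (Suc m)
    have eq: "(\<lambda>z. ((\<phi> ^^ Suc m) z) ^ n) = (\<lambda>z. ((\<phi> ^^ m) z) ^ n) \<circ> \<phi>"
      by (simp add: funpow_Suc_right o_def del: funpow.simps)
    have i: "in_H2 \<beta> (\<lambda>z. ((\<phi> ^^ Suc m) z) ^ n)" using Suc cl unfolding eq by blast
    have "h2_norm \<beta> (\<lambda>z. ((\<phi> ^^ Suc m) z) ^ n) \<le> C * h2_norm \<beta> (\<lambda>z. ((\<phi> ^^ m) z) ^ n)"
      using Suc C unfolding eq by blast
    also have "\<dots> \<le> K * h2_norm \<beta> (\<lambda>z. ((\<phi> ^^ m) z) ^ n)"
      using hn Suc by (intro mult_right_mono) (auto simp: K_def)
    also have "\<dots> \<le> K * (K ^ m * sqrt (\<beta> n))"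
      using Suc K by (intro mult_left_mono) auto
    finally show ?case using i by simp
  qed
  have key: "sqrt (\<beta> 0) * (rseq a m) ^ n \<le> K ^ m * sqrt (\<beta> n)" for n m
  proof -
    have "sqrt ((cmod ((\<phi> ^^ m) 0 ^ n))\<^sup>2 * \<beta> 0) \<le> h2_norm \<beta> (\<lambda>z. ((\<phi> ^^ m) z) ^ n)"
      using norm_lower[where \<beta> = \<beta> and g = "\<lambda>z. ((\<phi> ^^ m) z) ^ n", OF assms(1)] it[of m n] by simp
    moreover have "sqrt ((cmod ((\<phi> ^^ m) 0 ^ n))\<^sup>2 * \<beta> 0) = sqrt (\<beta> 0) * (rseq a m) ^ n"
      using rseq_props[OF assms(3,4), of m]
      by (simp add: \<phi>_def T_iter real_sqrt_mult norm_power)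
    ultimately show ?thesis using it[of m n] by linarith
  qed
  show ?thesis
    by (rule final_arith[OF assms(1) assms(1) assms(3,4) K key]) (use rseq_props[OF assms(3,4)] in auto)
qed

end
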